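(* Let $X$ be a Banach space of analytic functions on $\mathbb{U}$ such that the sequence $\{u_n\}$, $u_n(z)=z^n$, is contained in and bounded in $X$, and let $E\hookrightarrow\ell_\infty$ be a Banach sequence lattice. Let $\lambda=\{\lambda_n\}$ be such that the multiplier operator $M_\lambda\colon X\to E$, $M_\lambda f=\{\lambda_n\hat f(n)\}$, is defined. If $M_\lambda\colon X\to E$ is compact, then \[\limsup_{n\to\infty}|\lambda_n|=0.\]
   Context: $\mathbb{U}$ is the open unit disk and $f=\sum_{n\ge0}\hat f(n)u_n$ the Taylor expansion; "$\hookrightarrow$" denotes continuous inclusion. A Banach sequence lattice on $\mathbb{Z}_+$ is a Banach space $E$ of sequences with $|y_n|\le|x_n|$ for all $n$, $x\in E$ implying $y\in E$ and $\|y\|_E\le\|x\|_E$. *)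

theory Defs
  imports "HOL-Analysis.Analysis"
begin

text \<open>Analytic functions on the open unit disk are represented as functions
complex to complex that vanish outside the disk (canonical representatives).\<close>

abbreviation unit_disk :: "complex set" where
  "unit_disk \<equiv> ball 0 1"

definition monomial_fun :: "nat \<Rightarrow> complex \<Rightarrow> complex" where
  "monomial_fun n = (\<lambda>z. if z \<in> unit_disk then z ^ n else 0)"

definition taylor_coeff :: "(complex \<Rightarrow> complex) \<Rightarrow> nat \<Rightarrow> complex" where
  "taylor_coeff f n = (deriv ^^ n) f 0 / of_nat (fact n)"

definition banach_space_of_analytic_functions ::
  "(complex \<Rightarrow> complex) set \<Rightarrow> ((complex \<Rightarrow> complex) \<Rightarrow> real) \<Rightarrow> bool" where
  "banach_space_of_analytic_functions X N \<longleftrightarrow>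
     (\<forall>f\<in>X. f holomorphic_on unit_disk \<and> (\<forall>z. z \<notin> unit_disk \<longrightarrow> f z = 0)) \<and>
     (\<lambda>z. 0) \<in> X \<and>
     (\<forall>f\<in>X. \<forall>g\<in>X. (\<lambda>z. f z + g z) \<in> X) \<and>
     (\<forall>c. \<forall>f\<in>X. (\<lambda>z. c * f z) \<in> X) \<and>
     (\<forall>f\<in>X. 0 \<le> N f \<and> (N f = 0 \<longleftrightarrow> f = (\<lambda>z. 0))) \<and>
     (\<forall>f\<in>X. \<forall>g\<in>X. N (\<lambda>z. f z + g z) \<le> N f + N g) \<and>
     (\<forall>c. \<forall>f\<in>X. N (\<lambda>z. c * f z) = cmod c * N f) \<and>
     (\<forall>F. (\<forall>k. F k \<in> X) \<and>
          (\<forall>e>0. \<exists>M. \<forall>m\<ge>M. \<forall>n\<ge>M. N (\<lambda>z. F m z - F n z) < e) \<longrightarrow>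
          (\<exists>f\<in>X. (\<lambda>k. N (\<lambda>z. F k z - f z)) \<longlonglongrightarrow> 0))"

definition banach_sequence_lattice ::
  "(nat \<Rightarrow> complex) set \<Rightarrow> ((nat \<Rightarrow> complex) \<Rightarrow> real) \<Rightarrow> bool" where
  "banach_sequence_lattice E NE \<longleftrightarrow>
     (\<lambda>n. 0) \<in> E \<and>
     (\<forall>x\<in>E. \<forall>y\<in>E. (\<lambda>n. x n + y n) \<in> E) \<and>
     (\<forall>c. \<forall>x\<in>E. (\<lambda>n. c * x n) \<in> E) \<and>
     (\<forall>x\<in>E. 0 \<le> NE x \<and> (NE x = 0 \<longleftrightarrow> x = (\<lambda>n. 0))) \<and>
     (\<forall>x\<in>E. \<forall>y\<in>E. NE (\<lambda>n. x n + y n) \<le> NE x + NE y) \<and>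
     (\<forall>c. \<forall>x\<in>E. NE (\<lambda>n. c * x n) = cmod c * NE x) \<and>
     (\<forall>F. (\<forall>k. F k \<in> E) \<and>
          (\<forall>e>0. \<exists>M. \<forall>m\<ge>M. \<forall>n\<ge>M. NE (\<lambda>i. F m i - F n i) < e) \<longrightarrow>
          (\<exists>x\<in>E. (\<lambda>k. NE (\<lambda>i. F k i - x i)) \<longlonglongrightarrow> 0)) \<and>
     (\<forall>x\<in>E. \<forall>y. (\<forall>n. cmod (y n) \<le> cmod (x n)) \<longrightarrow> y \<in> E \<and> NE y \<le> NE x)"

definition embeds_in_linfty ::
  "(nat \<Rightarrow> complex) set \<Rightarrow> ((nat \<Rightarrow> complex) \<Rightarrow> real) \<Rightarrow> bool" where
  "embeds_in_linfty E NE \<longleftrightarrow> (\<exists>C. \<forall>x\<in>E. \<forall>n. cmod (x n) \<le> C * NE x)"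

definition multiplier_op :: "(nat \<Rightarrow> complex) \<Rightarrow> (complex \<Rightarrow> complex) \<Rightarrow> nat \<Rightarrow> complex" where
  "multiplier_op lam f = (\<lambda>n. lam n * taylor_coeff f n)"

definition compact_mult_operator ::
  "(complex \<Rightarrow> complex) set \<Rightarrow> ((complex \<Rightarrow> complex) \<Rightarrow> real) \<Rightarrow>
   (nat \<Rightarrow> complex) set \<Rightarrow> ((nat \<Rightarrow> complex) \<Rightarrow> real) \<Rightarrow>
   ((complex \<Rightarrow> complex) \<Rightarrow> nat \<Rightarrow> complex) \<Rightarrow> bool" where
  "compact_mult_operator X N E NE T \<longleftrightarrow>
     (\<forall>f\<in>X. T f \<in> E) \<and>
     (\<forall>f\<in>X. \<forall>g\<in>X. T (\<lambda>z. f z + g z) = (\<lambda>n. T f n + T g n)) \<and>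
     (\<forall>c::complex. \<forall>f\<in>X. T (\<lambda>z. c * f z) = (\<lambda>n. c * T f n)) \<and>
     (\<forall>(F::nat \<Rightarrow> complex \<Rightarrow> complex) (B::real). (\<forall>k. F k \<in> X \<and> N (F k) \<le> B) \<longrightarrow>
        (\<exists>(r::nat\<Rightarrow>nat) x. strict_mono r \<and> x \<in> E \<and> (\<lambda>k. NE (\<lambda>n. T (F (r k)) n - x n)) \<longlonglongrightarrow> 0))"

end

theory Submission
  imports Defs "HOL-Complex_Analysis.Complex_Analysis" "HOL-Library.Infinite_Set"
begin

lemma taylor_monomial:
  "taylor_coeff (monomial_fun k) n = (if n = k then 1 else 0)"
proof -
  have ev: "eventually (\<lambda>z. monomial_fun k z = (z - 0) ^ k) (nhds 0)"
    using eventually_nhds_in_open[of "ball (0::complex) 1" 0]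
    by (auto elim!: eventually_mono simp: monomial_fun_def)
  have "(deriv ^^ n) (monomial_fun k) 0 = (deriv ^^ n) (\<lambda>z. (z - 0) ^ k) 0"
    by (rule higher_deriv_cong_ev[OF ev refl])
  also have "\<dots> = pochhammer (of_nat (Suc k - n)) n * (0 - 0) ^ (k - n)"
    by (rule higher_deriv_power)
  finally have d: "(deriv ^^ n) (monomial_fun k) 0 = pochhammer (of_nat (Suc k - n)) n * (0::complex) ^ (k - n)"
    by simp
  show ?thesis
  proof (cases "n = k")
    case True
    then show ?thesis using d by (simp add: taylor_coeff_def pochhammer_fact[symmetric])
  next
    case False
    show ?thesis
    proof (cases "n < k")
      case True then show ?thesis using d False by (simp add: taylor_coeff_def)
    next
      case nl: False
      then have "Suc k - n = 0" "n > 0" using False by auto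
      then show ?thesis using d False by (simp add: taylor_coeff_def pochhammer_0_left)
    qed
  qed
qed

lemma mult_monomial: "multiplier_op lam (monomial_fun k) = (\<lambda>n. if n = k then lam k else 0)"
  by (auto simp: multiplier_op_def taylor_monomial)

theorem proposition2p2:
  fixes X :: "(complex \<Rightarrow> complex) set" and N :: "(complex \<Rightarrow> complex) \<Rightarrow> real"
    and E :: "(nat \<Rightarrow> complex) set" and NE :: "(nat \<Rightarrow> complex) \<Rightarrow> real"
    and lam :: "nat \<Rightarrow> complex"
  assumes "banach_space_of_analytic_functions X N"
    and "\<forall>n. monomial_fun n \<in> X"
    and "\<exists>B. \<forall>n. N (monomial_fun n) \<le> B"
    and "banach_sequence_lattice E NE"
    and "embeds_in_linfty E NE"
    and "\<forall>f\<in>X. multiplier_op lam f \<in> E"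
    and "compact_mult_operator X N E NE (multiplier_op lam)"
  shows "limsup (\<lambda>n. ereal (cmod (lam n))) = 0"
proof -
  obtain B where B: "\<forall>n. N (monomial_fun n) \<le> B" using assms(3) by blast
  obtain C where C: "\<forall>x\<in>E. \<forall>n. cmod (x n) \<le> C * NE x" using assms(5) embeds_in_linfty_def by blast
  have cpt: "\<And>F B. (\<forall>k. F k \<in> X \<and> N (F k) \<le> B) \<Longrightarrow>
        (\<exists>(r::nat\<Rightarrow>nat) x. strict_mono r \<and> x \<in> E \<and> (\<lambda>k. NE (\<lambda>n. multiplier_op lam (F (r k)) n - x n)) \<longlonglongrightarrow> 0)"
    using assms(7) unfolding compact_mult_operator_def by (elim conjE) blast
  have sub: "(\<lambda>i. x i - y i) \<in> E" if "x \<in> E" "y \<in> E" for x y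
  proof -
    have "(\<lambda>i. (-1) * y i) \<in> E" using assms(4) that unfolding banach_sequence_lattice_def by (elim conjE) blast
    moreover have add: "\<forall>x\<in>E. \<forall>y\<in>E. (\<lambda>n. x n + y n) \<in> E" using assms(4) unfolding banach_sequence_lattice_def by (elim conjE) assumption
    ultimately have "(\<lambda>i. x i + (-1) * y i) \<in> E" using add[rule_format, OF that(1)] by blast
    then show ?thesis by simp
  qed
  have lim: "(\<lambda>n. cmod (lam n)) \<longlonglongrightarrow> 0"
  proof (rule ccontr)
    assume "\<not> ?thesis"
    then obtain e where e: "e > 0" "\<not> eventually (\<lambda>n. dist (cmod (lam n)) 0 < e) sequentially"
      unfolding tendsto_iff by blast
    then have "frequently (\<lambda>n. e \<le> cmod (lam n)) sequentially"
      by (simp add: not_eventually not_less)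
    then have "infinite {n. e \<le> cmod (lam n)}"
      by (simp add: frequently_cofinite[symmetric] cofinite_eq_sequentially)
    from infinite_enumerate[OF this] obtain s :: "nat \<Rightarrow> nat" where s: "strict_mono s" "\<forall>n. e \<le> cmod (lam (s n))"
      by auto
    obtain r x where rx: "strict_mono r" "x \<in> E"
      "(\<lambda>k. NE (\<lambda>n. multiplier_op lam (monomial_fun (s (r k))) n - x n)) \<longlonglongrightarrow> 0"
    proof -
      have "\<forall>k. monomial_fun (s k) \<in> X \<and> N (monomial_fun (s k)) \<le> B" using assms(2) B by simp
      from cpt[OF this] show ?thesis using that by blast
    qed
    define m where "m k = s (r k)" for k
    have mono: "strict_mono m" using s(1) rx(1) unfolding m_def by (simp add: strict_mono_o[unfolded o_def])
    define D where "D k = (\<lambda>n. multiplier_op lam (monomial_fun (m k)) n - x n)" for k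
    have DE: "D k \<in> E" for k unfolding D_def using sub[OF _ rx(2)] assms(2,6) by simp
    have ND: "(\<lambda>k. C * NE (D k)) \<longlonglongrightarrow> 0"
      using tendsto_mult_right_zero[OF rx(3)] unfolding D_def m_def by simp
    have bnd: "cmod (D k n) \<le> C * NE (D k)" for k n using C DE by blast
    have x0: "x n = 0" for n
    proof -
      have ev: "eventually (\<lambda>k. cmod (x n) \<le> C * NE (D k)) sequentially"
      proof -
        have "eventually (\<lambda>k. m k > n) sequentially"
          unfolding eventually_sequentially using seq_suble[OF mono]
          by (metis Suc_le_eq order.trans)
        then show ?thesis
        proof (rule eventually_mono)
          fix k assume "m k > n"
          then have "D k n = - x n" by (simp add: D_def mult_monomial)
          then show "cmod (x n) \<le> C * NE (D k)" using bnd[of k n] by simp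
        qed
      qed
      have "cmod (x n) \<le> 0" using tendsto_le[OF _ ND tendsto_const ev] by simp
      then show ?thesis by simp
    qed
    have "eventually (\<lambda>k. e \<le> C * NE (D k)) sequentially"
    proof (rule always_eventually, rule allI)
      fix k
      have "D k (m k) = lam (m k)" by (simp add: D_def mult_monomial x0)
      then show "e \<le> C * NE (D k)" using bnd[of k "m k"] s(2)[rule_format, of "r k"] unfolding m_def by simp
    qed
    then have "e \<le> 0" using tendsto_le[OF _ ND tendsto_const] by simp
    then show False using e by simp
  qed
  have "(\<lambda>n. ereal (cmod (lam n))) \<longlonglongrightarrow> ereal 0"
    using lim by (simp add: tendsto_ereal)
  then have "limsup (\<lambda>n. ereal (cmod (lam n))) = ereal 0"
    by (rule lim_imp_Limsup[OF trivial_limit_sequentially])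
  then show ?thesis by (simp add: zero_ereal_def)
qed

end
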